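(* Let $\phi:\mathfrak V\to\mathfrak W$ be a $*$-linear map of super operator spaces, and let $\mathcal T\subseteq\mathfrak V$ be a closed subspace with $\mathcal T+\mathcal T^*=\mathfrak V$. Suppose there exist isometric $*$-representations of $\mathfrak V$ and $\mathfrak W$ on $\mathbb Z_2$-graded Hilbert spaces such that the restriction of $\phi$ to $\mathcal T$ is really strongly contractive. Then $\phi$ is strongly contractive (and hence hermitian contractive).
   Context: A $\mathbb Z_2$-graded Hilbert space $\widehat{\mathcal H}$ carries a grading operator $\epsilon$ (a selfadjoint unitary); the superinvolution on $\mathcal B(\widehat{\mathcal H})$ is $x^*=\epsilon\,x^\dagger\,\epsilon$, $x^\dagger$ the ordinary adjoint. A super operator space is an operator space $\mathfrak V$ with an antilinear involution $*$ such that $[x_{ij}]\mapsto[x_{ji}^*]$ is isometric on each $M_n(\mathfrak V)$. An isometric $*$-representation of $\mathfrak V$ is an isometric linear map $\rho:\mathfrak V\to\mathcal B(\widehat{\mathcal H})$ with $\rho(v^* )=\rho(v)^*$ (superinvolution). With respect to such representations, the strong norm of $x$ is $\Vert x\Vert^s=\sup\{|\langle x\xi,\epsilon\xi\rangle| : \xi\in\widehat{\mathcal H},\ \Vert\xi\Vert\le1\}$ (with $x$ identified with its image). A linear map $\phi$ is strongly contractive if $\Vert\phi(x)\Vert^s\le\Vert x\Vert^s$ for all $x$. The restriction of $\phi$ to $\mathcal T$ is really strongly contractive if for every unit vector $\eta$ in the representation space of $\mathfrak W$ and every $x\in\mathcal T$ there is a unit vector $\xi$ in the representation space of $\mathfrak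 V$ such that, with $a=\langle x\xi,\epsilon\xi\rangle$ and $b=\langle\phi(x)\eta,\epsilon\eta\rangle$, one has $|a|\ge|b|$ and $|\mathrm{Re}(a)|\ge|\mathrm{Re}(b)|$. The map $\phi$ is hermitian contractive if $\Vert\phi(x)\Vert\le\Vert x\Vert$ for every $x\in\mathfrak V$ with $x=x^*$. *)

theory Defs
  imports "HOL-Analysis.Analysis"
begin

class scvector = real_vector +
  fixes scaleC :: "complex \<Rightarrow> 'a \<Rightarrow> 'a" (infixr \<open>*\<^sub>C\<close> 75)
  assumes scaleC_add_right: "a *\<^sub>C (x + y) = a *\<^sub>C x + a *\<^sub>C y"
    and scaleC_add_left: "(a + b) *\<^sub>C x = a *\<^sub>C x + b *\<^sub>C x"
    and scaleC_scaleC: "a *\<^sub>C (b *\<^sub>C x) = (a * b) *\<^sub>C x"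
    and scaleC_one: "1 *\<^sub>C x = x"
    and scaleR_scaleC: "scaleR r x = complex_of_real r *\<^sub>C x"

class scnormed_vector = scvector + real_normed_vector +
  assumes norm_scaleC: "norm (a *\<^sub>C x) = cmod a * norm x"

class scinner = scnormed_vector +
  fixes cinner :: "'a \<Rightarrow> 'a \<Rightarrow> complex"
  assumes cinner_commute: "cinner x y = cnj (cinner y x)"
    and cinner_add_left: "cinner (x + y) z = cinner x z + cinner y z"
    and cinner_scaleC_left: "cinner (a *\<^sub>C x) y = a * cinner x y"
    and norm_eq_sqrt_cinner: "norm x = sqrt (Re (cinner x x))"
    and cinner_self_real: "Im (cinner x x) = 0"

class schilbert = scinner + complete_space

definition clin :: "('a::scvector \<Rightarrow> 'b::scvector) \<Rightarrow> bool" where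
  "clin f \<longleftrightarrow> (\<forall>x y. f (x + y) = f x + f y) \<and> (\<forall>c x. f (c *\<^sub>C x) = c *\<^sub>C f x)"

definition csubsp :: "'a::scvector set \<Rightarrow> bool" where
  "csubsp S \<longleftrightarrow> 0 \<in> S \<and> (\<forall>x\<in>S. \<forall>y\<in>S. x + y \<in> S) \<and> (\<forall>c. \<forall>x\<in>S. c *\<^sub>C x \<in> S)"

definition bounded_op :: "('h::schilbert \<Rightarrow> 'h) \<Rightarrow> bool" where
  "bounded_op A \<longleftrightarrow> clin A \<and> (\<exists>K. \<forall>x. norm (A x) \<le> K * norm x)"

definition op_norm :: "('h::schilbert \<Rightarrow> 'h) \<Rightarrow> real" where
  "op_norm A = Sup {norm (A x) | x. norm x \<le> 1}"

definition cadjoint :: "('h::schilbert \<Rightarrow> 'h) \<Rightarrow> ('h \<Rightarrow> 'h)" where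
  "cadjoint A = (THE B. \<forall>x y. cinner (A x) y = cinner x (B y))"

definition grading :: "('h::schilbert \<Rightarrow> 'h) \<Rightarrow> bool" where
  "grading \<epsilon> \<longleftrightarrow> bounded_op \<epsilon> \<and> (\<forall>x. \<epsilon> (\<epsilon> x) = x) \<and> (\<forall>x y. cinner (\<epsilon> x) y = cinner x (\<epsilon> y))"

definition superadj :: "('h::schilbert \<Rightarrow> 'h) \<Rightarrow> ('h \<Rightarrow> 'h) \<Rightarrow> ('h \<Rightarrow> 'h)" where
  "superadj \<epsilon> A = \<epsilon> \<circ> cadjoint A \<circ> \<epsilon>"

definition strong_norm :: "('h::schilbert \<Rightarrow> 'h) \<Rightarrow> ('h \<Rightarrow> 'h) \<Rightarrow> real" where
  "strong_norm \<epsilon> A = Sup {cmod (cinner (A \<xi>) (\<epsilon> \<xi>)) | \<xi>. norm \<xi> \<le> 1}"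

text \<open>An n x n matrix over V is a function nat => nat => V, only entries with
  indices < n being relevant.  Complex scalar matrices likewise.\<close>

definition cmatnorm :: "nat \<Rightarrow> nat \<Rightarrow> (nat \<Rightarrow> nat \<Rightarrow> complex) \<Rightarrow> real" where
  "cmatnorm m n \<alpha> = Sup {sqrt (\<Sum>i<m. (cmod (\<Sum>j<n. \<alpha> i j * z j))\<^sup>2) | z. (\<Sum>j<n. (cmod (z j))\<^sup>2) \<le> 1}"

definition matmul3 :: "nat \<Rightarrow> (nat \<Rightarrow> nat \<Rightarrow> complex) \<Rightarrow> (nat \<Rightarrow> nat \<Rightarrow> 'v::scvector)
    \<Rightarrow> (nat \<Rightarrow> nat \<Rightarrow> complex) \<Rightarrow> nat \<Rightarrow> nat \<Rightarrow> 'v" where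
  "matmul3 n \<alpha> X \<beta> i j = (\<Sum>k<n. \<Sum>l<n. (\<alpha> i k * \<beta> l j) *\<^sub>C X k l)"

definition dsum :: "nat \<Rightarrow> (nat \<Rightarrow> nat \<Rightarrow> 'v::zero) \<Rightarrow> (nat \<Rightarrow> nat \<Rightarrow> 'v) \<Rightarrow> nat \<Rightarrow> nat \<Rightarrow> 'v" where
  "dsum n X Y i j = (if i < n \<and> j < n then X i j
                     else if n \<le> i \<and> n \<le> j then Y (i - n) (j - n) else 0)"

text \<open>Abstract operator space (Ruan's axioms): a family of matrix norms on
  M_n(V), n \<ge> 1, with M_1(V) = V isometrically.\<close>
definition operator_space :: "(nat \<Rightarrow> (nat \<Rightarrow> nat \<Rightarrow> 'v::scnormed_vector) \<Rightarrow> real) \<Rightarrow> bool" where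
  "operator_space mn \<longleftrightarrow>
     (\<forall>X. mn 1 X = norm (X 0 0)) \<and>
     (\<forall>n X Y. (\<forall>i<n. \<forall>j<n. X i j = Y i j) \<longrightarrow> mn n X = mn n Y) \<and>
     (\<forall>n\<ge>1. \<forall>X. mn n X = 0 \<longleftrightarrow> (\<forall>i<n. \<forall>j<n. X i j = 0)) \<and>
     (\<forall>n\<ge>1. \<forall>X Y. mn n (\<lambda>i j. X i j + Y i j) \<le> mn n X + mn n Y) \<and>
     (\<forall>n\<ge>1. \<forall>c X. mn n (\<lambda>i j. c *\<^sub>C X i j) = cmod c * mn n X) \<and>
     (\<forall>m\<ge>1. \<forall>n\<ge>1. \<forall>\<alpha> X \<beta>.
        mn m (matmul3 n \<alpha> X \<beta>) \<le> cmatnorm m n \<alpha> * mn n X * cmatnorm n m \<beta>) \<and>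
     (\<forall>n\<ge>1. \<forall>m\<ge>1. \<forall>X Y. mn (n + m) (dsum n X Y) = max (mn n X) (mn m Y))"

definition super_operator_space ::
  "(nat \<Rightarrow> (nat \<Rightarrow> nat \<Rightarrow> 'v::scnormed_vector) \<Rightarrow> real) \<Rightarrow> ('v \<Rightarrow> 'v) \<Rightarrow> bool" where
  "super_operator_space mn st \<longleftrightarrow>
     operator_space mn \<and>
     (\<forall>x y. st (x + y) = st x + st y) \<and>
     (\<forall>c x. st (c *\<^sub>C x) = cnj c *\<^sub>C st x) \<and>
     (\<forall>x. st (st x) = x) \<and>
     (\<forall>n\<ge>1. \<forall>X. mn n (\<lambda>i j. st (X j i)) = mn n X)"

definition iso_star_rep ::
  "('v::scnormed_vector \<Rightarrow> 'v) \<Rightarrow> ('h::schilbert \<Rightarrow> 'h) \<Rightarrow> ('v \<Rightarrow> 'h \<Rightarrow> 'h) \<Rightarrow> bool" where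
  "iso_star_rep st \<epsilon> \<rho> \<longleftrightarrow>
     (\<forall>v. bounded_op (\<rho> v)) \<and>
     (\<forall>u v \<xi>. \<rho> (u + v) \<xi> = \<rho> u \<xi> + \<rho> v \<xi>) \<and>
     (\<forall>c v \<xi>. \<rho> (c *\<^sub>C v) \<xi> = c *\<^sub>C \<rho> v \<xi>) \<and>
     (\<forall>v. op_norm (\<rho> v) = norm v) \<and>
     (\<forall>v. \<rho> (st v) = superadj \<epsilon> (\<rho> v))"

definition star_linear :: "('v::scvector \<Rightarrow> 'v) \<Rightarrow> ('w::scvector \<Rightarrow> 'w) \<Rightarrow> ('v \<Rightarrow> 'w) \<Rightarrow> bool" where
  "star_linear stV stW \<phi> \<longleftrightarrow> clin \<phi> \<and> (\<forall>x. \<phi> (stV x) = stW (\<phi> x))"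

definition really_strongly_contractive_on ::
  "'v set \<Rightarrow> ('v \<Rightarrow> 'w) \<Rightarrow> ('h1::schilbert \<Rightarrow> 'h1) \<Rightarrow> ('v \<Rightarrow> 'h1 \<Rightarrow> 'h1)
     \<Rightarrow> ('h2::schilbert \<Rightarrow> 'h2) \<Rightarrow> ('w \<Rightarrow> 'h2 \<Rightarrow> 'h2) \<Rightarrow> bool" where
  "really_strongly_contractive_on T \<phi> \<epsilon>V \<rho>V \<epsilon>W \<rho>W \<longleftrightarrow>
     (\<forall>\<eta>. norm \<eta> = 1 \<longrightarrow> (\<forall>x\<in>T. \<exists>\<xi>. norm \<xi> = 1 \<and>
        (let a = cinner (\<rho>V x \<xi>) (\<epsilon>V \<xi>); b = cinner (\<rho>W (\<phi> x) \<eta>) (\<epsilon>W \<eta>)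
         in cmod a \<ge> cmod b \<and> \<bar>Re a\<bar> \<ge> \<bar>Re b\<bar>)))"

definition strongly_contractive ::
  "('v \<Rightarrow> 'w) \<Rightarrow> ('h1::schilbert \<Rightarrow> 'h1) \<Rightarrow> ('v \<Rightarrow> 'h1 \<Rightarrow> 'h1)
     \<Rightarrow> ('h2::schilbert \<Rightarrow> 'h2) \<Rightarrow> ('w \<Rightarrow> 'h2 \<Rightarrow> 'h2) \<Rightarrow> bool" where
  "strongly_contractive \<phi> \<epsilon>V \<rho>V \<epsilon>W \<rho>W \<longleftrightarrow>
     (\<forall>x. strong_norm \<epsilon>W (\<rho>W (\<phi> x)) \<le> strong_norm \<epsilon>V (\<rho>V x))"

definition hermitian_contractive ::
  "('v::scnormed_vector \<Rightarrow> 'v) \<Rightarrow> ('v \<Rightarrow> 'w::scnormed_vector) \<Rightarrow> bool" where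
  "hermitian_contractive stV \<phi> \<longleftrightarrow> (\<forall>x. stV x = x \<longrightarrow> norm (\<phi> x) \<le> norm x)"

end

theory Submission imports Defs begin

lemma cinner_zero_left[simp]: "cinner 0 y = 0"
  using cinner_add_left[of 0 0 y] by simp
lemma cinner_zero_right[simp]: "cinner x 0 = 0"
  by (subst cinner_commute) simp
lemma cinner_add_right: "cinner x (y + z) = cinner x y + cinner x z"
  by (metis cinner_commute cinner_add_left complex_cnj_add)
lemma cinner_scaleC_right: "cinner x (a *\<^sub>C y) = cnj a * cinner x y"
  by (metis cinner_commute cinner_scaleC_left complex_cnj_mult)
lemma cinner_scaleR_left: "cinner (r *\<^sub>R x) y = of_real r * cinner x y"
  by (simp add: scaleR_scaleC cinner_scaleC_left)
lemma cinner_scaleR_right: "cinner x (r *\<^sub>R y) = of_real r * cinner x y"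
  by (simp add: scaleR_scaleC cinner_scaleC_right)
lemma cinner_minus_left: "cinner (- x) y = - cinner x y"
  using cinner_scaleR_left[of "-1" x y] by simp
lemma cinner_minus_right: "cinner x (- y) = - cinner x y"
  using cinner_scaleR_right[of x "-1" y] by simp
lemma cinner_diff_left: "cinner (x - y) z = cinner x z - cinner y z"
  using cinner_add_left[of x "-y" z] by (simp add: cinner_minus_left)
lemma cinner_diff_right: "cinner x (y - z) = cinner x y - cinner x z"
  using cinner_add_right[of x y "-z"] by (simp add: cinner_minus_right)

lemma Re_cinner_self_nonneg: "0 \<le> Re (cinner x x)"
  by (metis norm_eq_sqrt_cinner norm_ge_zero real_sqrt_ge_0_iff)
lemma norm_sq_Re: "(norm x)^2 = Re (cinner x x)"
  using Re_cinner_self_nonneg[of x] by (simp add: norm_eq_sqrt_cinner)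
lemma cinner_self: "cinner x x = of_real ((norm x)^2)"
  by (simp add: norm_sq_Re complex_eq_iff cinner_self_real)

lemma norm_sq_add: "(norm (x + y))^2 = (norm x)^2 + 2 * Re (cinner x y) + (norm y)^2"
proof -
  have "(norm (x + y))^2 = Re (cinner x x + cinner x y + cinner y x + cinner y y)"
    unfolding norm_sq_Re by (simp add: cinner_add_left cinner_add_right algebra_simps)
  also have "cinner y x = cnj (cinner x y)" by (rule cinner_commute)
  also have "Re (cinner x x + cinner x y + cnj (cinner x y) + cinner y y)
     = Re (cinner x x) + 2 * Re (cinner x y) + Re (cinner y y)" by simp
  also have "\<dots> = (norm x)^2 + 2 * Re (cinner x y) + (norm y)^2" unfolding norm_sq_Re ..
  finally show ?thesis .
qed
lemma norm_sq_diff: "(norm (x - y))^2 = (norm x)^2 - 2 * Re (cinner x y) + (norm y)^2"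
  using norm_sq_add[of x "-y"] by (simp add: cinner_minus_right)
lemma parallelogram: fixes x y :: "'a::scinner" shows "(norm (x + y))^2 + (norm (x - y))^2 = 2 * (norm x)^2 + 2 * (norm y)^2"
  using norm_sq_add[of x y] norm_sq_diff[of x y] by linarith

lemma norm_sq_addC: "(norm (x + a *\<^sub>C y))^2 = (norm x)^2 + 2 * Re (cnj a * cinner x y) + (cmod a)^2 * (norm y)^2"
  by (simp add: norm_sq_add cinner_scaleC_right norm_scaleC power_mult_distrib)

lemma quad_step:
  assumes "y \<noteq> 0"
  shows "(norm (x + (- cinner x y / of_real ((norm y)^2)) *\<^sub>C y))^2 = (norm x)^2 - (cmod (cinner x y))^2 / (norm y)^2"
proof -
  define c where "c = cinner x y"
  define n where "n = (norm y)^2"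
  have n: "n > 0" using assms by (simp add: n_def)
  define a where "a = - c / of_real n"
  have e: "(norm (x + a *\<^sub>C y))^2 = (norm x)^2 + 2 * Re (cnj a * c) + (cmod a)^2 * n"
    by (simp add: norm_sq_addC c_def n_def)
  have cc: "c * cnj c = of_real ((cmod c)^2)" by (rule complex_norm_square[symmetric])
  have "cnj a * c = - (c * cnj c) / of_real n"
    by (simp add: a_def mult.commute)
  also have "\<dots> = - of_real ((cmod c)^2) / of_real n" by (simp only: cc)
  finally have r: "Re (cnj a * c) = - ((cmod c)^2 / n)" by simp
  have m: "(cmod a)^2 = (cmod c)^2 / n^2"
    using n by (simp add: a_def norm_divide power_divide)
  have m2: "(cmod c)^2 / n^2 * n = (cmod c)^2 / n" using n by (simp add: power2_eq_square)
  have "(norm (x + a *\<^sub>C y))^2 = (norm x)^2 - (cmod c)^2 / n"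
    unfolding e r m m2 by simp
  then show ?thesis by (simp add: a_def c_def n_def)
qed

lemma cauchy_schwarz: "cmod (cinner x y) \<le> norm x * norm y"
proof (cases "y = 0")
  case True then show ?thesis by simp
next
  case False
  have n: "(norm y)^2 > 0" using False by simp
  have "0 \<le> (norm x)^2 - (cmod (cinner x y))^2 / (norm y)^2"
    using quad_step[OF False, of x] by (metis zero_le_power2)
  then have "(cmod (cinner x y))^2 / (norm y)^2 \<le> (norm x)^2" by simp
  then have "(cmod (cinner x y))^2 \<le> (norm x)^2 * (norm y)^2" using n by (simp add: divide_le_eq)
  then have "(cmod (cinner x y))^2 \<le> (norm x * norm y)^2" by (simp add: power_mult_distrib)
  then show ?thesis
    by (meson mult_nonneg_nonneg norm_ge_zero power2_le_imp_le)
qed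

lemma scaleC_zero_left[simp]: "(0::complex) *\<^sub>C x = 0"
  using scaleR_scaleC[of 0 x] by simp
lemma scaleC_minus_left: "(- a) *\<^sub>C x = - (a *\<^sub>C x)"
proof -
  have "a *\<^sub>C x + (- a) *\<^sub>C x = 0" using scaleC_add_left[of a "-a" x] by simp
  then show ?thesis by (simp add: eq_neg_iff_add_eq_0 add.commute)
qed

lemma csubsp_diff: "csubsp K \<Longrightarrow> x \<in> K \<Longrightarrow> y \<in> K \<Longrightarrow> x - y \<in> K"
  unfolding csubsp_def
  by (metis diff_conv_add_uminus scaleC_minus_left scaleC_one)
lemma csubsp_scaleR: "csubsp K \<Longrightarrow> x \<in> K \<Longrightarrow> r *\<^sub>R x \<in> K"
  unfolding csubsp_def by (simp add: scaleR_scaleC)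

lemma closest_point:
  fixes z :: "'a::schilbert"
  assumes K: "csubsp K" and cl: "closed K"
  shows "\<exists>k0\<in>K. \<forall>k\<in>K. cinner (z - k0) k = 0"
proof -
  define D where "D = {(norm (z - k))^2 | k. k \<in> K}"
  define d where "d = Inf D"
  have K0: "0 \<in> K" using K by (simp add: csubsp_def)
  have Dne: "D \<noteq> {}" using K0 by (auto simp: D_def)
  have Dbdd: "bdd_below D" unfolding D_def by (rule bdd_belowI[of _ 0]) auto
  have lower: "d \<le> (norm (z - k))^2" if "k \<in> K" for k
    unfolding d_def using that Dbdd by (auto intro!: cInf_lower simp: D_def)
  have "\<exists>k. k \<in> K \<and> (norm (z - k))^2 < d + inverse (real (Suc n))" for n
  proof -
    have "Inf D < d + inverse (real (Suc n))" by (simp add: d_def)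
    from cInf_lessD[OF Dne this] show ?thesis by (auto simp: D_def)
  qed
  then obtain ks where ks: "\<And>n. ks n \<in> K" "\<And>n. (norm (z - ks n))^2 < d + inverse (real (Suc n))"
    by metis
  have pair: "(norm (ks m - ks n))^2 \<le> 2 * inverse (real (Suc m)) + 2 * inverse (real (Suc n))" for m n
  proof -
    define mid where "mid = (1/2) *\<^sub>R (ks m + ks n)"
    have midK: "mid \<in> K" unfolding mid_def
      using K ks(1) by (intro csubsp_scaleR) (auto simp: csubsp_def)
    have e1: "(z - ks m) + (z - ks n) = 2 *\<^sub>R (z - mid)"
      by (simp add: mid_def algebra_simps scaleR_2)
    have e2: "(z - ks m) - (z - ks n) = ks n - ks m" by simp
    have "(norm ((z - ks m) + (z - ks n)))^2 = 4 * (norm (z - mid))^2"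
      unfolding e1 by (simp add: power_mult_distrib)
    moreover have "d \<le> (norm (z - mid))^2" using lower midK by simp
    ultimately have A: "4 * d \<le> (norm ((z - ks m) + (z - ks n)))^2" by simp
    have "(norm (ks n - ks m))^2 = 2 * (norm (z - ks m))^2 + 2 * (norm (z - ks n))^2 - (norm ((z - ks m) + (z - ks n)))^2"
      using parallelogram[of "z - ks m" "z - ks n"] e2 by simp
    then have "(norm (ks n - ks m))^2 \<le> 2 * inverse (real (Suc m)) + 2 * inverse (real (Suc n))"
      using A ks(2)[of m] ks(2)[of n] by linarith
    then show ?thesis by (simp add: norm_minus_commute)
  qed
  have "Cauchy ks"
  proof (rule metric_CauchyI)
    fix e :: real assume e: "0 < e"
    then have "0 < e^2 / 4" by simp
    then obtain M where M: "inverse (real (Suc M)) < e^2 / 4" using reals_Archimedean by blast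
    show "\<exists>M. \<forall>m\<ge>M. \<forall>n\<ge>M. dist (ks m) (ks n) < e"
    proof (intro exI allI impI)
      fix m n assume mn: "M \<le> m" "M \<le> n"
      have im: "inverse (real (Suc m)) \<le> inverse (real (Suc M))" using mn by (simp add: le_imp_inverse_le)
      have inn: "inverse (real (Suc n)) \<le> inverse (real (Suc M))" using mn by (simp add: le_imp_inverse_le)
      have "(norm (ks m - ks n))^2 < e^2" using pair[of m n] im inn M by linarith
      then have "norm (ks m - ks n) < e" using e by (simp add: power2_less_imp_less)
      then show "dist (ks m) (ks n) < e" by (simp add: dist_norm)
    qed
  qed
  then obtain k0 where lim: "ks \<longlonglongrightarrow> k0" using Cauchy_convergent convergent_def by blast
  have k0K: "k0 \<in> K" using closed_sequentially[OF cl ks(1) lim] .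
  have L1: "(\<lambda>n. (norm (z - ks n))^2) \<longlonglongrightarrow> (norm (z - k0))^2"
    by (rule tendsto_power[OF tendsto_norm[OF tendsto_diff[OF tendsto_const lim]]])
  have L2: "(\<lambda>n. d + inverse (real (Suc n))) \<longlonglongrightarrow> d + 0"
    by (rule tendsto_add[OF tendsto_const LIMSEQ_inverse_real_of_nat])
  have L3: "\<exists>N. \<forall>n\<ge>N. (norm (z - ks n))^2 \<le> d + inverse (real (Suc n))"
    using ks(2) less_imp_le by blast
  have min0: "(norm (z - k0))^2 \<le> d"
    using LIMSEQ_le[OF L1 L2 L3] by simp
  show ?thesis
  proof (intro bexI[OF _ k0K] ballI)
    fix k assume kK: "k \<in> K"
    show "cinner (z - k0) k = 0"
    proof (cases "k = 0")
      case True then show ?thesis by simp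
    next
      case False
      define w where "w = z - k0"
      define a where "a = - cinner w k / of_real ((norm k)^2)"
      have "k0 - a *\<^sub>C k \<in> K" using K kK k0K by (intro csubsp_diff) (auto simp: csubsp_def)
      then have "d \<le> (norm (z - (k0 - a *\<^sub>C k)))^2" by (rule lower)
      also have "z - (k0 - a *\<^sub>C k) = w + a *\<^sub>C k" by (simp add: w_def)
      also have "(norm (w + a *\<^sub>C k))^2 = (norm w)^2 - (cmod (cinner w k))^2 / (norm k)^2"
        unfolding a_def by (rule quad_step[OF False])
      finally have "(cmod (cinner w k))^2 / (norm k)^2 \<le> 0" using min0 by (simp add: w_def)
      moreover have "(norm k)^2 > 0" using False by simp
      ultimately have "(cmod (cinner w k))^2 \<le> 0" by (simp add: divide_le_0_iff)
      then show ?thesis by (simp add: w_def)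
    qed
  qed
qed


lemma riesz:
  fixes f :: "'a::schilbert \<Rightarrow> complex"
  assumes add: "\<And>x y. f (x + y) = f x + f y" and sc: "\<And>c x. f (c *\<^sub>C x) = c * f x"
    and bnd: "\<And>x. cmod (f x) \<le> B * norm x"
  shows "\<exists>u. \<forall>x. f x = cinner x u"
proof (cases "\<forall>x. f x = 0")
  case True then show ?thesis by (intro exI[of _ 0]) simp
next
  case False
  then obtain z where fz: "f z \<noteq> 0" by blast
  have f0: "f 0 = 0" using add[of 0 0] by simp
  have fdiff: "f (x - y) = f x - f y" for x y using add[of "x - y" y] by simp
  define K where "K = {x. f x = 0}"
  have Ksub: "csubsp K" unfolding K_def csubsp_def by (simp add: f0 add sc)
  have Kcl: "closed K"
    unfolding closed_sequential_limits
  proof (intro allI impI)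
    fix xs l assume h: "(\<forall>n. xs n \<in> K) \<and> xs \<longlonglongrightarrow> l"
    have "(\<lambda>n. l - xs n) \<longlonglongrightarrow> l - l"
      using h by (intro tendsto_diff tendsto_const) blast
    then have "(\<lambda>n. B * norm (l - xs n)) \<longlonglongrightarrow> B * norm (l - l)"
      by (intro tendsto_mult_left tendsto_norm)
    then have lim: "(\<lambda>n. B * norm (l - xs n)) \<longlonglongrightarrow> 0" by simp
    have "cmod (f l) \<le> B * norm (l - xs n)" for n
    proof -
      have "f (l - xs n) = f l" using h fdiff by (simp add: K_def)
      then show ?thesis using bnd[of "l - xs n"] by simp
    qed
    then have "cmod (f l) \<le> 0" using LIMSEQ_le_const[OF lim] by blast
    then show "l \<in> K" by (simp add: K_def)
  qed
  obtain k0 where k0: "k0 \<in> K" "\<And>k. k \<in> K \<Longrightarrow> cinner (z - k0) k = 0"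
    using closest_point[OF Ksub Kcl, of z] by blast
  define w where "w = z - k0"
  have fw: "f w = f z" using k0(1) by (simp add: w_def fdiff K_def)
  have orth: "cinner k w = 0" if "k \<in> K" for k
    using k0(2)[OF that] cinner_commute[of k w] by (simp add: w_def)
  have wne: "w \<noteq> 0" using fw fz f0 by auto
  have ww: "cinner w w \<noteq> 0" using wne by (simp add: cinner_self)
  define u where "u = cnj (f w / cinner w w) *\<^sub>C w"
  show ?thesis
  proof (intro exI[of _ u] allI)
    fix x
    define y where "y = x - (f x / f w) *\<^sub>C w"
    have "f y = 0" using fz fw by (simp add: y_def fdiff sc)
    then have "cinner y w = 0" by (intro orth) (simp add: K_def)
    then have "cinner x w = (f x / f w) * cinner w w"
      by (simp add: y_def cinner_diff_left cinner_scaleC_left)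
    then have "f x = cinner x w * f w / cinner w w"
      using fz fw ww by (simp add: field_simps)
    then show "f x = cinner x u"
      by (simp add: u_def cinner_scaleC_right)
  qed
qed

lemma bounded_op_diff:
  assumes "bounded_op A" shows "A (x - y) = A x - A y"
proof -
  have "A ((x - y) + y) = A (x - y) + A y" using assms by (simp only: bounded_op_def clin_def)
  then have "A x = A (x - y) + A y" by simp
  then show ?thesis by (metis add_diff_cancel_right')
qed

lemma bounded_op_bound:
  assumes "bounded_op A" shows "\<exists>K\<ge>0. \<forall>x. norm (A x) \<le> K * norm x"
proof -
  obtain K where K: "\<forall>x. norm (A x) \<le> K * norm x" using assms unfolding bounded_op_def by blast
  have "norm (A x) \<le> max K 0 * norm x" for x
    using K[rule_format, of x] mult_right_mono[of K "max K 0" "norm x"] by simp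
  then show ?thesis by (intro exI[of _ "max K 0"]) auto
qed

lemma adjoint_exists:
  fixes A :: "'a::schilbert \<Rightarrow> 'a"
  assumes "bounded_op A"
  shows "\<exists>B. \<forall>x y. cinner (A x) y = cinner x (B y)"
proof -
  obtain K where K: "K \<ge> 0" "\<And>x. norm (A x) \<le> K * norm x" using bounded_op_bound[OF assms] by blast
  have "\<exists>u. \<forall>x. cinner (A x) y = cinner x u" for y
  proof (rule riesz[where B = "K * norm y"])
    fix x x' c
    show "cinner (A (x + x')) y = cinner (A x) y + cinner (A x') y"
      using assms by (simp add: bounded_op_def clin_def cinner_add_left)
    show "cinner (A (c *\<^sub>C x)) y = c * cinner (A x) y"
      using assms by (simp add: bounded_op_def clin_def cinner_scaleC_left)
    have "cmod (cinner (A x) y) \<le> norm (A x) * norm y" by (rule cauchy_schwarz)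
    also have "\<dots> \<le> K * norm x * norm y" using K(2)[of x] by (simp add: mult_right_mono)
    finally show "cmod (cinner (A x) y) \<le> K * norm y * norm x" by (simp add: mult_ac)
  qed
  then have "\<forall>y. \<exists>u. \<forall>x. cinner (A x) y = cinner x u" by blast
  from choice[OF this] obtain B where "\<forall>y. \<forall>x. cinner (A x) y = cinner x (B y)" by blast
  then show ?thesis by blast
qed

lemma cadjoint_prop:
  fixes A :: "'a::schilbert \<Rightarrow> 'a"
  assumes "bounded_op A"
  shows "cinner (A x) y = cinner x (cadjoint A y)"
proof -
  obtain B where B: "\<forall>x y. cinner (A x) y = cinner x (B y)" using adjoint_exists[OF assms] by blast
  have uniq: "B' = B" if h: "\<forall>x y. cinner (A x) y = cinner x (B' y)" for B'
  proof
    fix y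
    define v where "v = B' y - B y"
    have "cinner v v = cinner v (B' y) - cinner v (B y)"
      unfolding v_def by (rule cinner_diff_right)
    also have "cinner v (B' y) = cinner (A v) y" using h by metis
    also have "cinner v (B y) = cinner (A v) y" using B by metis
    finally have "cinner v v = 0" by simp
    then show "B' y = B y" by (simp add: cinner_self v_def)
  qed
  have ex1: "\<exists>!B. \<forall>x y. cinner (A x) y = cinner x (B y)"
    using B uniq by blast
  have "cadjoint A = B" unfolding cadjoint_def
    by (rule the1_equality[OF ex1]) (rule B)
  then show ?thesis using B by simp
qed

lemma grading_props:
  assumes "grading \<epsilon>"
  shows "bounded_op \<epsilon>" "\<epsilon> (\<epsilon> x) = x" "cinner (\<epsilon> x) y = cinner x (\<epsilon> y)" "norm (\<epsilon> x) = norm x"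
proof -
  show b: "bounded_op \<epsilon>" and e: "\<epsilon> (\<epsilon> x) = x" and s: "cinner (\<epsilon> x) y = cinner x (\<epsilon> y)"
    using assms unfolding grading_def by auto
  have "(norm (\<epsilon> x))^2 = Re (cinner (\<epsilon> x) (\<epsilon> x))" by (rule norm_sq_Re)
  also have "cinner (\<epsilon> x) (\<epsilon> x) = cinner x (\<epsilon> (\<epsilon> x))"
    using assms unfolding grading_def by blast
  also have "\<epsilon> (\<epsilon> x) = x" using assms unfolding grading_def by blast
  finally have "(norm (\<epsilon> x))^2 = (norm x)^2" by (simp add: norm_sq_Re)
  then show "norm (\<epsilon> x) = norm x" by (simp add: power2_eq_iff_nonneg)
qed

lemma bounded_op_zero: "bounded_op A \<Longrightarrow> A 0 = 0"
  using bounded_op_diff[of A 0 0] by simp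

lemma bounded_op_add: "bounded_op A \<Longrightarrow> A (x + y) = A x + A y"
  by (simp add: bounded_op_def clin_def)

lemma bounded_op_scaleC: "bounded_op A \<Longrightarrow> A (c *\<^sub>C x) = c *\<^sub>C A x"
  by (simp add: bounded_op_def clin_def)

lemma q_star:
  assumes g: "grading \<epsilon>" and r: "iso_star_rep st \<epsilon> \<rho>"
  shows "cinner (\<rho> (st v) \<xi>) (\<epsilon> \<xi>) = cnj (cinner (\<rho> v \<xi>) (\<epsilon> \<xi>))"
proof -
  have bv: "bounded_op (\<rho> v)" using r by (simp add: iso_star_rep_def)
  have "\<rho> (st v) \<xi> = \<epsilon> (cadjoint (\<rho> v) (\<epsilon> \<xi>))"
    using r by (simp add: iso_star_rep_def superadj_def)
  then have "cinner (\<rho> (st v) \<xi>) (\<epsilon> \<xi>) = cinner (cadjoint (\<rho> v) (\<epsilon> \<xi>)) (\<epsilon> (\<epsilon> \<xi>))"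
    using grading_props(3)[OF g] by simp
  also have "\<dots> = cinner (cadjoint (\<rho> v) (\<epsilon> \<xi>)) \<xi>" using grading_props(2)[OF g] by simp
  also have "\<dots> = cnj (cinner \<xi> (cadjoint (\<rho> v) (\<epsilon> \<xi>)))" by (rule cinner_commute)
  also have "cinner \<xi> (cadjoint (\<rho> v) (\<epsilon> \<xi>)) = cinner (\<rho> v \<xi>) (\<epsilon> \<xi>)"
    using cadjoint_prop[OF bv] by simp
  finally show ?thesis .
qed

lemma q_add:
  assumes r: "iso_star_rep st \<epsilon> \<rho>"
  shows "cinner (\<rho> (u + v) \<xi>) (\<epsilon> \<xi>) = cinner (\<rho> u \<xi>) (\<epsilon> \<xi>) + cinner (\<rho> v \<xi>) (\<epsilon> \<xi>)"
  using r by (simp add: iso_star_rep_def cinner_add_left)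

lemma q_scale:
  assumes r: "iso_star_rep st \<epsilon> \<rho>"
  shows "cinner (\<rho> (c *\<^sub>C v) \<xi>) (\<epsilon> \<xi>) = c * cinner (\<rho> v \<xi>) (\<epsilon> \<xi>)"
  using r by (simp add: iso_star_rep_def cinner_scaleC_left)

lemma q_vscale:
  assumes A: "bounded_op A" and g: "grading \<epsilon>"
  shows "cinner (A (c *\<^sub>C \<xi>)) (\<epsilon> (c *\<^sub>C \<xi>)) = c * cnj c * cinner (A \<xi>) (\<epsilon> \<xi>)"
  using bounded_op_scaleC[OF A] bounded_op_scaleC[OF grading_props(1)[OF g]]
  by (simp add: cinner_scaleC_left cinner_scaleC_right mult_ac)

lemma opnorm_upper:
  assumes A: "bounded_op A" and x: "norm x \<le> 1"
  shows "norm (A x) \<le> op_norm A"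
proof -
  obtain K where K: "K \<ge> 0" "\<And>x. norm (A x) \<le> K * norm x" using bounded_op_bound[OF A] by blast
  have "bdd_above {norm (A x) | x. norm x \<le> (1::real)}"
  proof (rule bdd_aboveI[of _ K], clarify)
    fix x :: 'a assume "norm x \<le> 1"
    then show "norm (A x) \<le> K" using K(2)[of x] K(1) mult_left_mono[of "norm x" 1 K] by linarith
  qed
  then show ?thesis unfolding op_norm_def using x by (intro cSup_upper) auto
qed

lemma q_le_opnorm:
  assumes A: "bounded_op A" and g: "grading \<epsilon>" and x: "norm x \<le> 1"
  shows "cmod (cinner (A x) (\<epsilon> x)) \<le> op_norm A"
proof -
  have "cmod (cinner (A x) (\<epsilon> x)) \<le> norm (A x) * norm (\<epsilon> x)" by (rule cauchy_schwarz)
  also have "\<dots> = norm (A x) * norm x" using grading_props(4)[OF g] by simp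
  also have "\<dots> \<le> norm (A x)" using x mult_left_mono[of "norm x" 1 "norm (A x)"] by simp
  also have "\<dots> \<le> op_norm A" by (rule opnorm_upper[OF A x])
  finally show ?thesis .
qed

lemma sn_bdd:
  assumes A: "bounded_op A" and g: "grading \<epsilon>"
  shows "bdd_above {cmod (cinner (A \<xi>) (\<epsilon> \<xi>)) | \<xi>. norm \<xi> \<le> 1}"
  using q_le_opnorm[OF A g] by (intro bdd_aboveI[of _ "op_norm A"]) auto

lemma sn_upper:
  assumes A: "bounded_op A" and g: "grading \<epsilon>" and x: "norm x \<le> 1"
  shows "cmod (cinner (A x) (\<epsilon> x)) \<le> strong_norm \<epsilon> A"
  unfolding strong_norm_def using x sn_bdd[OF A g] by (intro cSup_upper) auto

lemma sn_nonneg: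
  assumes A: "bounded_op A" and g: "grading \<epsilon>"
  shows "0 \<le> strong_norm \<epsilon> A"
  using sn_upper[OF A g, of 0] bounded_op_zero[OF A] bounded_op_zero[OF grading_props(1)[OF g]] by simp

lemma ex_small: "\<exists>\<xi>::'a::real_normed_vector. norm \<xi> \<le> 1"
  by (rule exI[where x=0]) simp

lemma sn_le_opnorm:
  assumes A: "bounded_op A" and g: "grading \<epsilon>"
  shows "strong_norm \<epsilon> A \<le> op_norm A"
  unfolding strong_norm_def using q_le_opnorm[OF A g] ex_small by (intro cSup_least) auto

lemma q_bound_all:
  assumes A: "bounded_op A" and g: "grading \<epsilon>"
  shows "cmod (cinner (A \<xi>) (\<epsilon> \<xi>)) \<le> strong_norm \<epsilon> A * (norm \<xi>)^2"
proof (cases "\<xi> = 0")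
  case True then show ?thesis
    using bounded_op_zero[OF A] by simp
next
  case False
  define c where "c = complex_of_real (1 / norm \<xi>)"
  have n1: "norm (c *\<^sub>C \<xi>) = 1" using False by (simp add: c_def norm_scaleC norm_divide)
  have "cinner (A (c *\<^sub>C \<xi>)) (\<epsilon> (c *\<^sub>C \<xi>)) = c * cnj c * cinner (A \<xi>) (\<epsilon> \<xi>)"
    by (rule q_vscale[OF A g])
  then have "cmod (cinner (A (c *\<^sub>C \<xi>)) (\<epsilon> (c *\<^sub>C \<xi>))) = cmod (cinner (A \<xi>) (\<epsilon> \<xi>)) / (norm \<xi>)^2"
    by (simp add: c_def norm_mult norm_divide power2_eq_square)
  moreover have "cmod (cinner (A (c *\<^sub>C \<xi>)) (\<epsilon> (c *\<^sub>C \<xi>))) \<le> strong_norm \<epsilon> A"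
    using n1 by (intro sn_upper[OF A g]) simp
  ultimately show ?thesis using False by (simp add: divide_le_eq mult.commute)
qed

lemma sa_bound:
  fixes S :: "'a::scinner \<Rightarrow> 'a"
  assumes add: "\<And>x y. S (x + y) = S x + S y" and dif: "\<And>x y. S (x - y) = S x - S y"
    and sa: "\<And>x y. cinner (S x) y = cinner x (S y)"
    and qb: "\<And>\<xi>. cmod (cinner (S \<xi>) \<xi>) \<le> w * (norm \<xi>)^2"
    and w: "0 \<le> w" and x: "norm x \<le> 1"
  shows "norm (S x) \<le> w"
proof (cases "S x = 0")
  case True then show ?thesis using w by simp
next
  case False
  define m where "m = norm (S x)"
  have m: "m > 0" using False by (simp add: m_def)
  define y where "y = (1 / m) *\<^sub>R S x"
  have ny: "norm y = 1" using m by (simp add: y_def m_def)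
  have sxy: "cinner (S x) y = of_real m"
  proof -
    have "cinner (S x) y = of_real (1 / m) * cinner (S x) (S x)" by (simp add: y_def cinner_scaleR_right)
    also have "\<dots> = of_real (1 / m * m^2)" by (simp add: cinner_self m_def)
    also have "1 / m * m^2 = m" using m by (simp add: power2_eq_square)
    finally show ?thesis .
  qed
  have syx: "cinner (S y) x = cnj (cinner (S x) y)"
    using sa[of y x] cinner_commute[of y "S x"] by simp
  have "cinner (S (x + y)) (x + y) - cinner (S (x - y)) (x - y) = 2 * cinner (S x) y + 2 * cinner (S y) x"
    by (simp add: add dif cinner_add_left cinner_add_right cinner_diff_left cinner_diff_right algebra_simps)
  then have "Re (cinner (S (x + y)) (x + y)) - Re (cinner (S (x - y)) (x - y)) = 4 * m"
    using sxy syx by (simp add: complex_eq_iff)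
  moreover have "Re (cinner (S (x + y)) (x + y)) \<le> w * (norm (x + y))^2"
    using qb[of "x + y"] complex_Re_le_cmod order_trans by blast
  moreover have "- Re (cinner (S (x - y)) (x - y)) \<le> w * (norm (x - y))^2"
    using qb[of "x - y"] abs_Re_le_cmod[of "cinner (S (x - y)) (x - y)"] by linarith
  moreover have "w * (norm (x + y))^2 + w * (norm (x - y))^2 = w * (2 * (norm x)^2 + 2 * (norm y)^2)"
    using parallelogram[of x y] by (metis distrib_left)
  moreover have "(norm x)^2 \<le> 1" using x by (simp add: power_le_one)
  ultimately have "4 * m \<le> w * (2 * (norm x)^2 + 2)" using ny by simp
  also have "\<dots> \<le> w * 4" using \<open>(norm x)^2 \<le> 1\<close> w by (intro mult_left_mono) auto
  finally show ?thesis by (simp add: m_def)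
qed

lemma herm_opnorm:
  assumes g: "grading \<epsilon>" and r: "iso_star_rep st \<epsilon> \<rho>" and h: "st h = h"
  shows "op_norm (\<rho> h) \<le> strong_norm \<epsilon> (\<rho> h)"
proof -
  define A where "A = \<rho> h"
  have A: "bounded_op A" using r by (simp add: iso_star_rep_def A_def)
  have e: "bounded_op \<epsilon>" using grading_props(1)[OF g] .
  define S where "S = (\<lambda>\<xi>. \<epsilon> (A \<xi>))"
  have SC: "S y = cadjoint A (\<epsilon> y)" for y
  proof -
    have "A y = \<rho> (st h) y" by (simp add: A_def h)
    also have "\<dots> = \<epsilon> (cadjoint A (\<epsilon> y))" using r by (simp add: iso_star_rep_def superadj_def A_def)
    finally show ?thesis by (simp add: S_def grading_props(2)[OF g])
  qed
  have sa: "cinner (S x) y = cinner x (S y)" for x y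
  proof -
    have "cinner (S x) y = cinner (A x) (\<epsilon> y)" by (simp add: S_def grading_props(3)[OF g])
    also have "\<dots> = cinner x (cadjoint A (\<epsilon> y))" by (rule cadjoint_prop[OF A])
    also have "\<dots> = cinner x (S y)" by (simp only: SC)
    finally show ?thesis .
  qed
  have qS: "cinner (S \<xi>) \<xi> = cinner (A \<xi>) (\<epsilon> \<xi>)" for \<xi>
    by (simp add: S_def grading_props(3)[OF g])
  have w: "0 \<le> strong_norm \<epsilon> A" by (rule sn_nonneg[OF A g])
  have "norm (A x) \<le> strong_norm \<epsilon> A" if "norm x \<le> 1" for x
  proof -
    have "norm (S x) \<le> strong_norm \<epsilon> A"
    proof (rule sa_bound[OF _ _ sa _ w that])
      fix a b
      show "S (a + b) = S a + S b" by (simp add: S_def bounded_op_add[OF A] bounded_op_add[OF e])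
      show "S (a - b) = S a - S b" by (simp add: S_def bounded_op_diff[OF A] bounded_op_diff[OF e])
      show "cmod (cinner (S a) a) \<le> strong_norm \<epsilon> A * (norm a)^2"
        unfolding qS by (rule q_bound_all[OF A g])
    qed
    then show ?thesis by (simp add: S_def grading_props(4)[OF g])
  qed
  then show ?thesis unfolding op_norm_def A_def using ex_small by (intro cSup_least) auto
qed

theorem mainTheorem5:
  fixes mnV :: "nat \<Rightarrow> (nat \<Rightarrow> nat \<Rightarrow> 'v::scnormed_vector) \<Rightarrow> real"
    and mnW :: "nat \<Rightarrow> (nat \<Rightarrow> nat \<Rightarrow> 'w::scnormed_vector) \<Rightarrow> real"
    and stV :: "'v \<Rightarrow> 'v" and stW :: "'w \<Rightarrow> 'w"
    and \<phi> :: "'v \<Rightarrow> 'w" and T :: "'v set"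
    and \<epsilon>V :: "'h1::schilbert \<Rightarrow> 'h1" and \<rho>V :: "'v \<Rightarrow> 'h1 \<Rightarrow> 'h1"
    and \<epsilon>W :: "'h2::schilbert \<Rightarrow> 'h2" and \<rho>W :: "'w \<Rightarrow> 'h2 \<Rightarrow> 'h2"
  assumes "super_operator_space mnV stV"
    and "super_operator_space mnW stW"
    and "star_linear stV stW \<phi>"
    and "csubsp T" and "closed T"
    and "{t + stV s | t s. t \<in> T \<and> s \<in> T} = UNIV"
    and "grading \<epsilon>V" and "iso_star_rep stV \<epsilon>V \<rho>V"
    and "grading \<epsilon>W" and "iso_star_rep stW \<epsilon>W \<rho>W"
    and "really_strongly_contractive_on T \<phi> \<epsilon>V \<rho>V \<epsilon>W \<rho>W"
  shows "strongly_contractive \<phi> \<epsilon>V \<rho>V \<epsilon>W \<rho>W \<and> hermitian_contractive stV \<phi>"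
proof -
  note sl = assms(3) and Tsub = assms(4) and decomp = assms(6)
  note gV = assms(7) and rV = assms(8) and gW = assms(9) and rW = assms(10) and rsc = assms(11)
  have phi_add: "\<phi> (a + b) = \<phi> a + \<phi> b" for a b using sl by (simp add: star_linear_def clin_def)
  have phi_sc: "\<phi> (c *\<^sub>C a) = c *\<^sub>C \<phi> a" for c a using sl by (simp add: star_linear_def clin_def)
  have phi_st: "\<phi> (stV a) = stW (\<phi> a)" for a using sl by (simp add: star_linear_def)
  have bV: "bounded_op (\<rho>V v)" for v using rV by (simp add: iso_star_rep_def)
  have bW: "bounded_op (\<rho>W w)" for w using rW by (simp add: iso_star_rep_def)
  define qV where "qV v \<xi> = cinner (\<rho>V v \<xi>) (\<epsilon>V \<xi>)" for v \<xi>
  define qW where "qW w \<eta> = cinner (\<rho>W w \<eta>) (\<epsilon>W \<eta>)" for w \<eta>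
  have unit: "cmod (qW (\<phi> x) \<eta>) \<le> strong_norm \<epsilon>V (\<rho>V x)" if \<eta>1: "norm \<eta> = 1" for x \<eta>
  proof (cases "qW (\<phi> x) \<eta> = 0")
    case True then show ?thesis using sn_nonneg[OF bV gV] by simp
  next
    case False
    define c where "c = qW (\<phi> x) \<eta>"
    define \<omega> where "\<omega> = cnj c / of_real (cmod c)"
    have c0: "cmod c > 0" using False by (simp add: c_def)
    have om1: "cmod \<omega> = 1" using c0 by (simp add: \<omega>_def norm_divide)
    have omc: "\<omega> * c = of_real (cmod c)"
    proof -
      have "\<omega> * c = (c * cnj c) / of_real (cmod c)" by (simp add: \<omega>_def mult.commute)
      also have "c * cnj c = of_real ((cmod c)^2)" by (rule complex_norm_square[symmetric])
      finally show ?thesis using c0 by (simp add: power2_eq_square)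
    qed
    define y where "y = \<omega> *\<^sub>C x"
    have "y \<in> {t + stV s | t s. t \<in> T \<and> s \<in> T}" using decomp by simp
    then obtain t s where ts: "t \<in> T" "s \<in> T" "y = t + stV s" by blast
    define u where "u = t + s"
    have uT: "u \<in> T" using Tsub ts by (simp add: csubsp_def u_def)
    obtain \<xi> where \<xi>1: "norm \<xi> = 1" and ab:
      "\<bar>Re (qV u \<xi>)\<bar> \<ge> \<bar>Re (qW (\<phi> u) \<eta>)\<bar>"
      using rsc \<eta>1 uT unfolding really_strongly_contractive_on_def qV_def qW_def Let_def by blast
    have "qW (\<phi> y) \<eta> = qW (\<phi> t) \<eta> + cnj (qW (\<phi> s) \<eta>)"
      unfolding qW_def using ts(3) phi_add phi_st q_add[OF rW] q_star[OF gW rW] by simp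
    moreover have "qW (\<phi> u) \<eta> = qW (\<phi> t) \<eta> + qW (\<phi> s) \<eta>"
      unfolding qW_def u_def using phi_add q_add[OF rW] by simp
    ultimately have reW: "Re (qW (\<phi> y) \<eta>) = Re (qW (\<phi> u) \<eta>)" by simp
    have "qV y \<xi> = qV t \<xi> + cnj (qV s \<xi>)"
      unfolding qV_def using ts(3) q_add[OF rV] q_star[OF gV rV] by simp
    moreover have "qV u \<xi> = qV t \<xi> + qV s \<xi>"
      unfolding qV_def u_def using q_add[OF rV] by simp
    ultimately have reV: "Re (qV y \<xi>) = Re (qV u \<xi>)" by simp
    have "qW (\<phi> y) \<eta> = \<omega> * c"
      unfolding qW_def y_def c_def using phi_sc q_scale[OF rW] by simp
    then have "Re (qW (\<phi> y) \<eta>) = cmod c" using omc by simp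
    have qVy: "qV y \<xi> = \<omega> * qV x \<xi>" unfolding qV_def y_def using q_scale[OF rV] by simp
    have "cmod c = Re (qW (\<phi> u) \<eta>)" using reW \<open>Re (qW (\<phi> y) \<eta>) = cmod c\<close> by simp
    also have "\<dots> \<le> \<bar>Re (qV u \<xi>)\<bar>" using ab by linarith
    also have "\<dots> = \<bar>Re (qV y \<xi>)\<bar>" using reV by simp
    also have "\<dots> \<le> cmod (qV y \<xi>)" by (rule abs_Re_le_cmod)
    also have "\<dots> = cmod (qV x \<xi>)" using qVy om1 by (simp add: norm_mult)
    also have "\<dots> \<le> strong_norm \<epsilon>V (\<rho>V x)"
      unfolding qV_def using \<xi>1 by (intro sn_upper[OF bV gV]) simp
    finally show ?thesis by (simp add: c_def)
  qed
  have sc: "strong_norm \<epsilon>W (\<rho>W (\<phi> x)) \<le> strong_norm \<epsilon>V (\<rho>V x)" for x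
    unfolding strong_norm_def[of \<epsilon>W]
  proof (rule cSup_least)
    show "{cmod (cinner (\<rho>W (\<phi> x) \<xi>) (\<epsilon>W \<xi>)) | \<xi>. norm \<xi> \<le> 1} \<noteq> {}" using ex_small by auto
  next
    fix r assume "r \<in> {cmod (cinner (\<rho>W (\<phi> x) \<xi>) (\<epsilon>W \<xi>)) | \<xi>. norm \<xi> \<le> 1}"
    then obtain \<eta> where \<eta>: "norm \<eta> \<le> 1" "r = cmod (qW (\<phi> x) \<eta>)" by (auto simp: qW_def)
    show "r \<le> strong_norm \<epsilon>V (\<rho>V x)"
    proof (cases "\<eta> = 0")
      case True then show ?thesis
        using \<eta> sn_nonneg[OF bV gV] bounded_op_zero[OF bW] by (simp add: qW_def)
    next
      case False
      define e where "e = complex_of_real (1 / norm \<eta>)"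
      have n1: "norm (e *\<^sub>C \<eta>) = 1" using False by (simp add: e_def norm_scaleC norm_divide)
      have "qW (\<phi> x) (e *\<^sub>C \<eta>) = e * cnj e * qW (\<phi> x) \<eta>"
        unfolding qW_def by (rule q_vscale[OF bW gW])
      then have "cmod (qW (\<phi> x) (e *\<^sub>C \<eta>)) = cmod (qW (\<phi> x) \<eta>) / (norm \<eta>)^2"
        by (simp add: e_def norm_mult norm_divide power2_eq_square)
      then have "cmod (qW (\<phi> x) \<eta>) = (norm \<eta>)^2 * cmod (qW (\<phi> x) (e *\<^sub>C \<eta>))"
        using False by (simp add: field_simps)
      also have "\<dots> \<le> 1 * cmod (qW (\<phi> x) (e *\<^sub>C \<eta>))"
        using \<eta>(1) by (intro mult_right_mono) (auto simp: power_le_one)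
      also have "\<dots> \<le> strong_norm \<epsilon>V (\<rho>V x)" using unit[OF n1] by simp
      finally show ?thesis using \<eta>(2) by simp
    qed
  qed
  have hc: "norm (\<phi> x) \<le> norm x" if h: "stV x = x" for x
  proof -
    have hW: "stW (\<phi> x) = \<phi> x" using phi_st[of x] h by simp
    have "norm (\<phi> x) = op_norm (\<rho>W (\<phi> x))" using rW by (simp add: iso_star_rep_def)
    also have "\<dots> \<le> strong_norm \<epsilon>W (\<rho>W (\<phi> x))" by (rule herm_opnorm[OF gW rW hW])
    also have "\<dots> \<le> strong_norm \<epsilon>V (\<rho>V x)" by (rule sc)
    also have "\<dots> \<le> op_norm (\<rho>V x)" by (rule sn_le_opnorm[OF bV gV])
    also have "\<dots> = norm x" using rV by (simp add: iso_star_rep_def)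
    finally show ?thesis .
  qed
  show ?thesis
    unfolding strongly_contractive_def hermitian_contractive_def using sc hc by blast
qed

end
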